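(* Let $\Omega$ be a finite set, let $G \leq \mathrm{Sym}(\Omega)$ be semiprimitive and let $\Sigma$ be a non-trivial $G$-invariant partition of $\Omega$. Then (i) $D(G) \leq D(G^\Sigma)$; (ii) if $|\sigma| \geq |\Sigma|-1$ for all $\sigma \in \Sigma$, then $D(G)=2$.
   Context: For $G \leq \mathrm{Sym}(\Omega)$, the distinguishing number $D(G)$ is the least positive integer $k$ such that there is a partition of $\Omega$ into $k$ parts for which only the identity of $G$ stabilises every part setwise. A permutation group is semiprimitive if every normal subgroup is transitive or semiregular (semiregular: all point stabilisers trivial). A $G$-invariant partition $\Sigma$ is non-trivial if it has more than one part and not all parts are singletons; $G^\Sigma$ denotes the permutation group induced by $G$ on the set of parts $\Sigma$. *)

theory Defs
  imports "HOL-Combinatorics.Permutations"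
begin

definition perm_group :: "('a \<Rightarrow> 'a) set \<Rightarrow> 'a set \<Rightarrow> bool" where
  "perm_group G \<Omega> \<longleftrightarrow> id \<in> G \<and> (\<forall>g\<in>G. g permutes \<Omega>) \<and>
     (\<forall>g\<in>G. \<forall>h\<in>G. g \<circ> h \<in> G) \<and> (\<forall>g\<in>G. inv g \<in> G)"

definition normal_subgroup :: "('a \<Rightarrow> 'a) set \<Rightarrow> ('a \<Rightarrow> 'a) set \<Rightarrow> 'a set \<Rightarrow> bool" where
  "normal_subgroup N G \<Omega> \<longleftrightarrow> N \<subseteq> G \<and> perm_group N \<Omega> \<and>
     (\<forall>g\<in>G. \<forall>n\<in>N. g \<circ> n \<circ> inv g \<in> N)"

definition transitive_on :: "('a \<Rightarrow> 'a) set \<Rightarrow> 'a set \<Rightarrow> bool" where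
  "transitive_on N \<Omega> \<longleftrightarrow> (\<forall>x\<in>\<Omega>. \<forall>y\<in>\<Omega>. \<exists>n\<in>N. n x = y)"

definition semiregular_on :: "('a \<Rightarrow> 'a) set \<Rightarrow> 'a set \<Rightarrow> bool" where
  "semiregular_on N \<Omega> \<longleftrightarrow> (\<forall>x\<in>\<Omega>. \<forall>n\<in>N. n x = x \<longrightarrow> n = id)"

definition semiprimitive :: "('a \<Rightarrow> 'a) set \<Rightarrow> 'a set \<Rightarrow> bool" where
  "semiprimitive G \<Omega> \<longleftrightarrow> perm_group G \<Omega> \<and> transitive_on G \<Omega> \<and>
     (\<forall>N. normal_subgroup N G \<Omega> \<longrightarrow> transitive_on N \<Omega> \<or> semiregular_on N \<Omega>)"

definition is_partition :: "'a set set \<Rightarrow> 'a set \<Rightarrow> bool" where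
  "is_partition P \<Omega> \<longleftrightarrow> (\<forall>B\<in>P. B \<noteq> {}) \<and> \<Union>P = \<Omega> \<and>
     (\<forall>B\<in>P. \<forall>C\<in>P. B \<noteq> C \<longrightarrow> B \<inter> C = {})"

definition distinguishing_number :: "('a \<Rightarrow> 'a) set \<Rightarrow> 'a set \<Rightarrow> nat" where
  "distinguishing_number G \<Omega> = (LEAST k. k > 0 \<and> (\<exists>P. is_partition P \<Omega> \<and> card P = k \<and>
     (\<forall>g\<in>G. (\<forall>B\<in>P. g ` B = B) \<longrightarrow> g = id)))"

definition invariant_partition :: "('a \<Rightarrow> 'a) set \<Rightarrow> 'a set set \<Rightarrow> 'a set \<Rightarrow> bool" where
  "invariant_partition G \<Sigma> \<Omega> \<longleftrightarrow> is_partition \<Sigma> \<Omega> \<and> (\<forall>g\<in>G. \<forall>B\<in>\<Sigma>. g ` B \<in> \<Sigma>)"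

definition nontrivial_partition :: "'a set set \<Rightarrow> bool" where
  "nontrivial_partition \<Sigma> \<longleftrightarrow> card \<Sigma> > 1 \<and> (\<exists>B\<in>\<Sigma>. card B \<noteq> 1)"

definition induced_group :: "('a \<Rightarrow> 'a) set \<Rightarrow> 'a set set \<Rightarrow> ('a set \<Rightarrow> 'a set) set" where
  "induced_group G \<Sigma> = (\<lambda>g. \<lambda>B. if B \<in> \<Sigma> then g ` B else B) ` G"

end

theory Submission
  imports Defs
begin

lemma pg_facts:
  assumes "perm_group G \<Omega>" "g \<in> G"
  shows "bij g" "inj g" "surj g" "inv g \<in> G" "g ` \<Omega> = \<Omega>" "g permutes \<Omega>"
proof -
  have p: "g permutes \<Omega>" using assms unfolding perm_group_def by auto
  show "bij g" "inj g" "surj g" "g ` \<Omega> = \<Omega>" "g permutes \<Omega>"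
    using permutes_bij[OF p] permutes_inj[OF p] permutes_surj[OF p] permutes_image[OF p] p by auto
  show "inv g \<in> G" using assms unfolding perm_group_def by auto
qed

lemma blk_inv:
  assumes "perm_group G \<Omega>" "invariant_partition G \<Sigma> \<Omega>" "g \<in> G" "B \<in> \<Sigma>"
  shows "inv g ` B \<in> \<Sigma>" "g ` (inv g ` B) = B"
  using assms pg_facts[OF assms(1,3)] unfolding invariant_partition_def
  by (auto simp: image_f_inv_f)

lemma two_points:
  assumes "is_partition \<Sigma> \<Omega>" "card \<Sigma> > 1"
  obtains B1 B2 x y where "B1 \<in> \<Sigma>" "B2 \<in> \<Sigma>" "B1 \<noteq> B2" "x \<in> B1" "y \<in> B2" "x \<noteq> y"
proof -
  obtain B1 B2 where "B1 \<in> \<Sigma>" "B2 \<in> \<Sigma>" "B1 \<noteq> B2"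
    using assms(2) by (metis One_nat_def card.infinite card_le_Suc0_iff_eq not_less
        less_nat_zero_code)
  moreover then obtain x y where "x \<in> B1" "y \<in> B2"
    using assms(1) unfolding is_partition_def by blast
  moreover have "x \<noteq> y" using calculation assms(1) unfolding is_partition_def by blast
  ultimately show ?thesis using that by blast
qed

lemma kernel_trivial:
  assumes sp: "semiprimitive G \<Omega>" and ip: "invariant_partition G \<Sigma> \<Omega>" and c: "card \<Sigma> > 1"
    and g: "g \<in> G" "\<forall>B\<in>\<Sigma>. g ` B = B" and x: "x \<in> \<Omega>" "g x = x"
  shows "g = id"
proof -
  have pg: "perm_group G \<Omega>" using sp unfolding semiprimitive_def by blast
  have part: "is_partition \<Sigma> \<Omega>" using ip unfolding invariant_partition_def by blast
  define K where "K = {g\<in>G. \<forall>B\<in>\<Sigma>. g ` B = B}"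
  have "perm_group K \<Omega>"
    unfolding perm_group_def
  proof (intro conjI ballI)
    show "id \<in> K" using pg unfolding K_def perm_group_def by auto
  next
    fix h assume "h \<in> K" then show "h permutes \<Omega>" using pg unfolding K_def perm_group_def by auto
  next
    fix h k assume hk: "h \<in> K" "k \<in> K"
    have "(h \<circ> k) ` B = B" if "B \<in> \<Sigma>" for B
    proof -
      have "(h \<circ> k) ` B = h ` (k ` B)" by (simp add: image_comp)
      then show ?thesis using hk that unfolding K_def by auto
    qed
    then show "h \<circ> k \<in> K"
      using pg hk unfolding K_def perm_group_def by auto
  next
    fix h assume h: "h \<in> K"
    then have "h \<in> G" by (simp add: K_def)
    have "inv h ` B = B" if "B \<in> \<Sigma>" for B
    proof -
      have "inv h ` (h ` B) = B" using pg_facts(2)[OF pg \<open>h \<in> G\<close>] by (simp add: image_inv_f_f)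
      then show ?thesis using h that unfolding K_def by auto
    qed
    then show "inv h \<in> K" using pg_facts(4)[OF pg \<open>h \<in> G\<close>] unfolding K_def by auto
  qed
  moreover have "\<forall>h\<in>G. \<forall>n\<in>K. h \<circ> n \<circ> inv h \<in> K"
  proof (intro ballI)
    fix h n assume h: "h \<in> G" and n: "n \<in> K"
    have "h \<circ> n \<circ> inv h \<in> G" using pg h n pg_facts(4)[OF pg h] unfolding perm_group_def K_def by auto
    moreover have "(h \<circ> n \<circ> inv h) ` B = B" if "B \<in> \<Sigma>" for B
    proof -
      have "(h \<circ> n \<circ> inv h) ` B = h ` (n ` (inv h ` B))" by (simp add: image_comp)
      also have "n ` (inv h ` B) = inv h ` B" using n blk_inv(1)[OF pg ip h that] unfolding K_def by auto
      finally show ?thesis using blk_inv(2)[OF pg ip h that] by simp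
    qed
    ultimately show "h \<circ> n \<circ> inv h \<in> K" unfolding K_def by auto
  qed
  ultimately have "normal_subgroup K G \<Omega>" unfolding normal_subgroup_def K_def by auto
  moreover have "\<not> transitive_on K \<Omega>"
  proof
    assume tr: "transitive_on K \<Omega>"
    obtain B1 B2 a b where bb: "B1 \<in> \<Sigma>" "B2 \<in> \<Sigma>" "B1 \<noteq> B2" "a \<in> B1" "b \<in> B2" "a \<noteq> b"
      using two_points[OF part c] by blast
    then have "a \<in> \<Omega>" "b \<in> \<Omega>" using part unfolding is_partition_def by blast+
    then obtain n where n: "n \<in> K" "n a = b" using tr unfolding transitive_on_def by blast
    have "n ` B1 = B1" using n(1) bb(1) unfolding K_def by blast
    then have "b \<in> B1" using n(2) bb(4) by blast
    then show False using bb part unfolding is_partition_def by blast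
  qed
  ultimately have "semiregular_on K \<Omega>" using sp unfolding semiprimitive_def by blast
  moreover have "g \<in> K" using g unfolding K_def by auto
  ultimately show ?thesis using x unfolding semiregular_on_def by blast
qed

lemma D_le:
  assumes "is_partition P \<Omega>" "card P > 0" "\<forall>g\<in>G. (\<forall>B\<in>P. g ` B = B) \<longrightarrow> g = id"
  shows "distinguishing_number G \<Omega> \<le> card P"
  unfolding distinguishing_number_def by (rule Least_le) (use assms in auto)

lemma D_ex:
  assumes "is_partition P \<Omega>" "card P > 0" "\<forall>g\<in>G. (\<forall>B\<in>P. g ` B = B) \<longrightarrow> g = id"
  shows "distinguishing_number G \<Omega> > 0 \<and> (\<exists>P. is_partition P \<Omega> \<and> card P = distinguishing_number G \<Omega> \<and>
     (\<forall>g\<in>G. (\<forall>B\<in>P. g ` B = B) \<longrightarrow> g = id))"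
  unfolding distinguishing_number_def by (rule LeastI_ex) (use assms in auto)

lemma ind_perm:
  assumes pg: "perm_group G \<Omega>" and g: "g \<in> G" and C: "C \<subseteq> \<Sigma>" "finite C"
    and m: "\<forall>B\<in>C. g ` B \<in> C"
  shows "(\<lambda>B. if B \<in> \<Sigma> then g ` B else B) ` C = C"
proof (rule endo_inj_surj[OF C(2)])
  show "(\<lambda>B. if B \<in> \<Sigma> then g ` B else B) ` C \<subseteq> C" using m C by auto
  have "inj g" using pg_facts[OF pg g] by simp
  show "inj_on (\<lambda>B. if B \<in> \<Sigma> then g ` B else B) C"
  proof (rule inj_onI)
    fix B B' assume "B \<in> C" "B' \<in> C" "(if B \<in> \<Sigma> then g ` B else B) = (if B' \<in> \<Sigma> then g ` B' else B')"
    moreover have "B \<in> \<Sigma>" "B' \<in> \<Sigma>" using C \<open>B \<in> C\<close> \<open>B' \<in> C\<close> by blast+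
    ultimately have "g ` B = g ` B'" by (simp only: if_True)
    then show "B = B'" by (simp add: inj_image_eq_iff[OF \<open>inj g\<close>])
  qed
qed

lemma part_i:
  assumes fin: "finite \<Omega>"
    and sp: "semiprimitive G \<Omega>"
    and ip: "invariant_partition G \<Sigma> \<Omega>"
    and nt: "nontrivial_partition \<Sigma>"
  shows "distinguishing_number G \<Omega> \<le> distinguishing_number (induced_group G \<Sigma>) \<Sigma>"
proof -
  have pg: "perm_group G \<Omega>" using sp unfolding semiprimitive_def by blast
  have tr: "transitive_on G \<Omega>" using sp unfolding semiprimitive_def by blast
  have part: "is_partition \<Sigma> \<Omega>" using ip unfolding invariant_partition_def by blast
  have inv: "\<forall>g\<in>G. \<forall>B\<in>\<Sigma>. g ` B \<in> \<Sigma>" using ip unfolding invariant_partition_def by blast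
  have c: "card \<Sigma> > 1" using nt unfolding nontrivial_partition_def by blast
  then have finS: "finite \<Sigma>" using card.infinite by fastforce
  have blk: "\<tau> = \<tau>'" if "\<tau> \<in> \<Sigma>" "\<tau>' \<in> \<Sigma>" "x \<in> \<tau>" "x \<in> \<tau>'" for \<tau> \<tau>' x
    using part that unfolding is_partition_def by blast
  define ind where "ind g = (\<lambda>B. if B \<in> \<Sigma> then g ` B else B)" for g :: "'a \<Rightarrow> 'a"
  define H where "H = induced_group G \<Sigma>"
  have H: "H = ind ` G" unfolding H_def induced_group_def ind_def by simp
  define S where "S = (\<lambda>B. {B}) ` \<Sigma>"
  have "is_partition S \<Sigma>" unfolding S_def is_partition_def by auto
  moreover have "card S > 0" unfolding S_def using c by (simp add: card_image)
  moreover have "\<forall>h\<in>H. (\<forall>C\<in>S. h ` C = C) \<longrightarrow> h = id"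
  proof (intro ballI impI)
    fix h assume "h \<in> H" "\<forall>C\<in>S. h ` C = C"
    then obtain g where "h = ind g" "\<forall>B\<in>\<Sigma>. h ` {B} = {B}" using H S_def by auto
    then show "h = id" unfolding ind_def by (auto simp: fun_eq_iff)
  qed
  ultimately obtain P where kpos: "distinguishing_number H \<Sigma> > 0" and
    P: "is_partition P \<Sigma>" "card P = distinguishing_number H \<Sigma>"
       "\<forall>h\<in>H. (\<forall>C\<in>P. h ` C = C) \<longrightarrow> h = id"
    using D_ex[of S \<Sigma> H] by blast
  define k where "k = distinguishing_number H \<Sigma>"
  have finP: "finite P" using kpos P(2) card.infinite by fastforce
  have CP: "C \<subseteq> \<Sigma>" "finite C" "C \<noteq> {}" if "C \<in> P" for C
    using P(1) that finS unfolding is_partition_def by (auto intro: finite_subset)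
  have Puniq: "C = C'" if "C \<in> P" "C' \<in> P" "\<tau> \<in> C" "\<tau> \<in> C'" for C C' \<tau>
    using P(1) that unfolding is_partition_def by blast
  have uniq: "C = C'" if that0: "C \<in> P" "C' \<in> P" "x \<in> \<Union>C" "x \<in> \<Union>C'" for C C' x
  proof -
    obtain \<tau> \<tau>' where "\<tau> \<in> C" "\<tau>' \<in> C'" "x \<in> \<tau>" "x \<in> \<tau>'" using that0 by blast
    then have "\<tau> = \<tau>'" using blk CP that by blast
    then show ?thesis using Puniq that \<open>\<tau> \<in> C\<close> \<open>\<tau>' \<in> C'\<close> by blast
  qed
  have k2: "card P \<ge> 2"
  proof (rule ccontr)
    assume "\<not> card P \<ge> 2"
    then have "card P = 1" using kpos P(2) by linarith
    then obtain C where PC: "P = {C}" using card_1_singletonE by blast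
    then have CS: "C = \<Sigma>" using P(1) unfolding is_partition_def by auto
    have fixall: "\<forall>B\<in>\<Sigma>. g ` B = B" if g: "g \<in> G" for g
    proof -
      have "ind g ` \<Sigma> = \<Sigma>" unfolding ind_def using ind_perm[OF pg g _ finS] inv g by blast
      then have "ind g = id" using P(3) H g PC CS by blast
      then have idB: "ind g B = B" for B by simp
      show ?thesis
      proof
        fix B assume "B \<in> \<Sigma>" then show "g ` B = B" using idB[of B] unfolding ind_def by simp
      qed
    qed
    obtain B1 B2 a b where bb: "B1 \<in> \<Sigma>" "B2 \<in> \<Sigma>" "B1 \<noteq> B2" "a \<in> B1" "b \<in> B2" "a \<noteq> b"
      using two_points[OF part c] by blast
    then have "a \<in> \<Omega>" "b \<in> \<Omega>" using part unfolding is_partition_def by blast+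
    then obtain n where n: "n \<in> G" "n a = b" using tr unfolding transitive_on_def by blast
    have "n ` B1 = B1" using fixall[OF n(1)] bb(1) by blast
    then have "b \<in> B1" using n(2) bb(4) by blast
    then show False using bb blk by blast
  qed
  obtain \<sigma>0 where s0: "\<sigma>0 \<in> \<Sigma>" "card \<sigma>0 \<noteq> 1" using nt unfolding nontrivial_partition_def by blast
  have "\<sigma>0 \<noteq> {}" "\<sigma>0 \<subseteq> \<Omega>" using s0 part unfolding is_partition_def by blast+
  have "finite \<sigma>0" using finite_subset[OF \<open>\<sigma>0 \<subseteq> \<Omega>\<close> fin] .
  then have "card \<sigma>0 \<noteq> 0" using \<open>\<sigma>0 \<noteq> {}\<close> by simp
  then have "card \<sigma>0 > 1" using s0(2) by linarith
  then obtain \<alpha> \<beta> where ab: "\<alpha> \<in> \<sigma>0" "\<beta> \<in> \<sigma>0" "\<alpha> \<noteq> \<beta>"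
    using card_le_Suc0_iff_eq[OF \<open>finite \<sigma>0\<close>] by (metis One_nat_def not_less)
  have "\<alpha> \<in> \<Omega>" "\<beta> \<in> \<Omega>" using ab \<open>\<sigma>0 \<subseteq> \<Omega>\<close> by auto
  obtain C1 where C1: "C1 \<in> P" "\<sigma>0 \<in> C1" using P(1) s0 unfolding is_partition_def by blast
  obtain C2 where C2: "C2 \<in> P" "C2 \<noteq> C1"
  proof -
    have "\<not> P \<subseteq> {C1}" using k2 card_mono[of "{C1}" P] by fastforce
    then show ?thesis using that by blast
  qed
  define F where "F C = {x \<in> \<Union>C. x \<noteq> \<alpha>} \<union> {x. x = \<alpha> \<and> C = C2}" for C
  define Q where "Q = F ` P - {{}}"
  have aC1: "\<alpha> \<in> \<Union>C1" "\<beta> \<in> \<Union>C1" using C1 ab by auto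
  have FO: "F C \<subseteq> \<Omega>" if "C \<in> P" for C
    using that CP part \<open>\<alpha> \<in> \<Omega>\<close> unfolding F_def is_partition_def by blast
  have "is_partition Q \<Omega>"
    unfolding is_partition_def
  proof (intro conjI ballI impI)
    fix D assume "D \<in> Q" then show "D \<noteq> {}" unfolding Q_def by blast
  next
    show "\<Union>Q = \<Omega>"
    proof
      show "\<Union>Q \<subseteq> \<Omega>" using FO unfolding Q_def by blast
      show "\<Omega> \<subseteq> \<Union>Q"
      proof
        fix x assume "x \<in> \<Omega>"
        then obtain \<tau> where "\<tau> \<in> \<Sigma>" "x \<in> \<tau>" using part unfolding is_partition_def by blast
        then obtain C where "C \<in> P" "\<tau> \<in> C" using P(1) unfolding is_partition_def by blast
        show "x \<in> \<Union>Q"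
        proof (cases "x = \<alpha>")
          case True
          then have "x \<in> F C2" unfolding F_def by simp
          then show ?thesis using C2 unfolding Q_def by blast
        next
          case False
          then have "x \<in> F C" unfolding F_def using \<open>\<tau> \<in> C\<close> \<open>x \<in> \<tau>\<close> by blast
          then show ?thesis using \<open>C \<in> P\<close> unfolding Q_def by blast
        qed
      qed
    qed
  next
    fix D D' assume "D \<in> Q" "D' \<in> Q" "D \<noteq> D'"
    then obtain C C' where "C \<in> P" "C' \<in> P" "D = F C" "D' = F C'" "C \<noteq> C'" unfolding Q_def by blast
    show "D \<inter> D' = {}"
    proof (rule ccontr)
      assume "D \<inter> D' \<noteq> {}"
      then obtain x where "x \<in> F C" "x \<in> F C'" using \<open>D = F C\<close> \<open>D' = F C'\<close> by blast
      then show False using uniq[OF \<open>C \<in> P\<close> \<open>C' \<in> P\<close>] \<open>C \<noteq> C'\<close> unfolding F_def by blast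
    qed
  qed
  moreover have cQ: "card Q \<le> card P"
  proof -
    have "card Q \<le> card (F ` P)" unfolding Q_def using finP by (intro card_mono) auto
    also have "\<dots> \<le> card P" by (rule card_image_le[OF finP])
    finally show ?thesis .
  qed
  moreover have "card Q > 0"
  proof -
    have "F C2 \<in> Q" unfolding Q_def F_def using C2 by auto
    moreover have "finite Q" unfolding Q_def using finP by simp
    ultimately show ?thesis by (simp add: card_gt_0_iff) blast
  qed
  moreover have "\<forall>g\<in>G. (\<forall>D\<in>Q. g ` D = D) \<longrightarrow> g = id"
  proof (intro ballI impI)
    fix g assume g: "g \<in> G" and gQ: "\<forall>D\<in>Q. g ` D = D"
    have inj: "inj g" using pg_facts[OF pg g] by simp
    have pt: "g x \<in> F C" if "C \<in> P" "x \<in> F C" for C x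
    proof -
      have "F C \<in> Q" unfolding Q_def using that by blast
      then show ?thesis using gQ that by blast
    qed
    have gs0: "g ` \<sigma>0 \<in> \<Sigma>" using inv g s0 by blast
    have "\<beta> \<in> F C1" unfolding F_def using aC1 ab C2 by auto
    then have gb: "g \<beta> \<in> \<Union>C1" using pt[OF C1(1)] C2 unfolding F_def by auto
    have "\<alpha> \<in> F C2" unfolding F_def by auto
    then have "g \<alpha> \<in> F C2" using pt C2 by blast
    then have ga: "g \<alpha> = \<alpha>"
    proof (cases "g \<alpha> = \<alpha>")
      case False
      with \<open>g \<alpha> \<in> F C2\<close> have "g \<alpha> \<in> \<Union>C2" unfolding F_def by auto
      then obtain \<tau>2 where "\<tau>2 \<in> C2" "g \<alpha> \<in> \<tau>2" by blast
      then have "\<tau>2 = g ` \<sigma>0" using blk[OF _ gs0] CP C2 ab by blast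
      then have "g \<beta> \<in> \<Union>C2" using \<open>\<tau>2 \<in> C2\<close> ab by blast
      then show ?thesis using uniq[OF C1(1) C2(1) gb] C2 by simp
    qed
    have "\<alpha> \<in> g ` \<sigma>0" using ga ab(1) by (metis imageI)
    then have gs: "g ` \<sigma>0 = \<sigma>0" using blk[OF gs0 s0(1), of \<alpha>] ab(1) by blast
    have mapC: "\<forall>\<tau>\<in>C. g ` \<tau> \<in> C" if C: "C \<in> P" for C
    proof
      fix \<tau> assume t: "\<tau> \<in> C"
      show "g ` \<tau> \<in> C"
      proof (cases "\<tau> = \<sigma>0")
        case True
        then show ?thesis using gs t by simp
      next
        case False
        have tS: "\<tau> \<in> \<Sigma>" using CP C t by blast
        have gt: "g ` \<tau> \<in> \<Sigma>" using inv g tS by blast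
        have "g ` \<tau> \<noteq> \<sigma>0" using gs False inj by (metis inj_image_eq_iff)
        have "\<tau> \<noteq> {}" using part tS unfolding is_partition_def by blast
        then obtain a where a: "a \<in> \<tau>" by blast
        have "a \<noteq> \<alpha>" using blk[OF tS s0(1)] a ab False by blast
        then have "a \<in> F C" unfolding F_def using a t by blast
        then have "g a \<in> F C" using pt C by blast
        moreover have "g a \<noteq> \<alpha>" using blk[OF gt s0(1)] a ab \<open>g ` \<tau> \<noteq> \<sigma>0\<close> by blast
        ultimately have "g a \<in> \<Union>C" unfolding F_def by blast
        then obtain \<tau>' where "\<tau>' \<in> C" "g a \<in> \<tau>'" by blast
        moreover have "\<tau>' \<in> \<Sigma>" using CP(1)[OF C] \<open>\<tau>' \<in> C\<close> by blast
        moreover have "g a \<in> g ` \<tau>" using a by blast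
        ultimately have "\<tau>' = g ` \<tau>" using blk[OF _ gt] by blast
        then show ?thesis using \<open>\<tau>' \<in> C\<close> by simp
      qed
    qed
    have fixC: "\<forall>C\<in>P. ind g ` C = C"
    proof
      fix C assume "C \<in> P" show "ind g ` C = C"
        unfolding ind_def using ind_perm[OF pg g CP(1,2)[OF \<open>C \<in> P\<close>] mapC[OF \<open>C \<in> P\<close>]] .
    qed
    have "ind g \<in> H" unfolding H by (rule imageI[OF g])
    then have "(\<forall>C\<in>P. ind g ` C = C) \<longrightarrow> ind g = id" by (rule bspec[OF P(3)])
    then have "ind g = id" using fixC by (rule mp)
    then have idB: "ind g B = B" for B by simp
    have "\<forall>B\<in>\<Sigma>. g ` B = B"
    proof
      fix B assume "B \<in> \<Sigma>" then show "g ` B = B" using idB[of B] unfolding ind_def by simp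
    qed
    then show "g = id" using kernel_trivial[OF sp ip c g _ \<open>\<alpha> \<in> \<Omega>\<close> ga] by blast
  qed
  ultimately have "distinguishing_number G \<Omega> \<le> card Q" by (intro D_le) auto
  then show ?thesis using cQ P(2) H_def by simp
qed

lemma part_ii:
  assumes fin: "finite \<Omega>"
    and sp: "semiprimitive G \<Omega>"
    and ip: "invariant_partition G \<Sigma> \<Omega>"
    and nt: "nontrivial_partition \<Sigma>"
    and big: "\<forall>\<sigma>\<in>\<Sigma>. card \<sigma> \<ge> card \<Sigma> - 1"
  shows "distinguishing_number G \<Omega> = 2"
proof -
  have pg: "perm_group G \<Omega>" using sp unfolding semiprimitive_def by blast
  have tr: "transitive_on G \<Omega>" using sp unfolding semiprimitive_def by blast
  have part: "is_partition \<Sigma> \<Omega>" using ip unfolding invariant_partition_def by blast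
  have inv: "\<forall>g\<in>G. \<forall>B\<in>\<Sigma>. g ` B \<in> \<Sigma>" using ip unfolding invariant_partition_def by blast
  have c: "card \<Sigma> > 1" using nt unfolding nontrivial_partition_def by blast
  then have finS: "finite \<Sigma>" using card.infinite by fastforce
  have blk: "\<tau> = \<tau>'" if "\<tau> \<in> \<Sigma>" "\<tau>' \<in> \<Sigma>" "x \<in> \<tau>" "x \<in> \<tau>'" for \<tau> \<tau>' x
    using part that unfolding is_partition_def by blast
  have sub: "B \<subseteq> \<Omega>" if "B \<in> \<Sigma>" for B using part that unfolding is_partition_def by blast
  have ne: "B \<noteq> {}" if "B \<in> \<Sigma>" for B using part that unfolding is_partition_def by blast
  define m where "m = card \<Sigma>"
  obtain e where e: "bij_betw e {0..<m} \<Sigma>" using ex_bij_betw_nat_finite[OF finS] m_def by blast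
  have eS: "e i \<in> \<Sigma>" if "i < m" for i using e that unfolding bij_betw_def by auto
  have einj: "i = j" if "i < m" "j < m" "e i = e j" for i j
    using e that unfolding bij_betw_def inj_on_def by auto
  have esurj: "\<exists>i<m. B = e i" if "B \<in> \<Sigma>" for B
    using e that unfolding bij_betw_def by auto
  have "\<forall>i. \<exists>T. i < m \<longrightarrow> T \<subseteq> e i \<and> card T = i"
  proof
    fix i show "\<exists>T. i < m \<longrightarrow> T \<subseteq> e i \<and> card T = i"
    proof (cases "i < m")
      case True
      then have "i \<le> card (e i)" using big eS[OF True] m_def by fastforce
      then obtain T where "T \<subseteq> e i" "card T = i" by (rule obtain_subset_with_card_n)
      then show ?thesis by blast
    qed simp
  qed
  then obtain A where A: "\<And>i. i < m \<Longrightarrow> A i \<subseteq> e i \<and> card (A i) = i" by metis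
  define X where "X = (\<Union>i\<in>{0..<m}. A i)"
  have key: "e i \<inter> X = A i" if i: "i < m" for i
  proof
    show "A i \<subseteq> e i \<inter> X" using A[OF i] i unfolding X_def by auto
    show "e i \<inter> X \<subseteq> A i"
    proof
      fix x assume x: "x \<in> e i \<inter> X"
      then obtain j where j: "j < m" "x \<in> A j" unfolding X_def by auto
      then have "x \<in> e j" using A[OF j(1)] by blast
      then have "e i = e j" using blk[OF eS[OF i] eS[OF j(1)]] x by blast
      then have "i = j" using einj i j(1) by blast
      then show "x \<in> A i" using j by simp
    qed
  qed
  have XO: "X \<subseteq> \<Omega>" unfolding X_def using A eS sub by fastforce
  have "1 < m" using c m_def by simp
  then have "card (A 1) = 1" using A by blast
  then obtain a where a: "A 1 = {a}" using card_1_singletonE by blast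
  have aX: "a \<in> e 1" "a \<in> X" using key[OF \<open>1 < m\<close>] a by auto
  have "X \<noteq> {}" using aX by blast
  have "finite (A 0)" using A[of 0] \<open>1 < m\<close> eS[of 0] sub fin by (meson finite_subset less_trans zero_less_one)
  then have "A 0 = {}" using A[of 0] \<open>1 < m\<close> by simp
  then have "e 0 \<subseteq> \<Omega> - X" using key[of 0] \<open>1 < m\<close> sub[OF eS[of 0]] by auto
  then have "\<Omega> - X \<noteq> {}" using ne[OF eS[of 0]] \<open>1 < m\<close> by auto
  define P where "P = {X, \<Omega> - X}"
  have "is_partition P \<Omega>" unfolding P_def is_partition_def
    using \<open>X \<noteq> {}\<close> \<open>\<Omega> - X \<noteq> {}\<close> XO by auto
  moreover have cP: "card P = 2" unfolding P_def using \<open>X \<noteq> {}\<close> by (auto simp: card_insert_if)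
  moreover have "\<forall>g\<in>G. (\<forall>B\<in>P. g ` B = B) \<longrightarrow> g = id"
  proof (intro ballI impI)
    fix g assume g: "g \<in> G" and gP: "\<forall>B\<in>P. g ` B = B"
    have gX: "g ` X = X" using gP unfolding P_def by blast
    have inj: "inj g" using pg_facts[OF pg g] by simp
    have ge: "g ` e i = e i" if i: "i < m" for i
    proof -
      obtain j where j: "j < m" "g ` e i = e j" using esurj inv g eS[OF i] by metis
      have "g ` (e i \<inter> X) = g ` e i \<inter> g ` X" by (rule image_Int[OF inj])
      then have "g ` A i = e j \<inter> X" using key[OF i] j gX by simp
      then have "card (A i) = card (A j)" using key[OF j(1)] card_image[OF inj_on_subset[OF inj]]
        by (metis subset_UNIV)
      then have "i = j" using A i j(1) by metis
      then show ?thesis using j by simp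
    qed
    have fixall: "\<forall>B\<in>\<Sigma>. g ` B = B" using ge esurj by metis
    have "g ` A 1 = A 1"
    proof -
      have "g ` (e 1 \<inter> X) = g ` e 1 \<inter> g ` X" by (rule image_Int[OF inj])
      then show ?thesis using key[OF \<open>1 < m\<close>] ge[OF \<open>1 < m\<close>] gX by simp
    qed
    then have "g a = a" using a by auto
    moreover have "a \<in> \<Omega>" using aX XO by blast
    ultimately show "g = id" using kernel_trivial[OF sp ip c g fixall] by blast
  qed
  ultimately have le2: "distinguishing_number G \<Omega> \<le> 2" and
    ex: "distinguishing_number G \<Omega> > 0 \<and> (\<exists>P. is_partition P \<Omega> \<and> card P = distinguishing_number G \<Omega> \<and>
     (\<forall>g\<in>G. (\<forall>B\<in>P. g ` B = B) \<longrightarrow> g = id))"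
    using D_le[of P \<Omega> G] D_ex[of P \<Omega> G] by auto
  have "distinguishing_number G \<Omega> \<noteq> 1"
  proof
    assume d1: "distinguishing_number G \<Omega> = 1"
    then obtain P' where P': "is_partition P' \<Omega>" "card P' = 1" "\<forall>g\<in>G. (\<forall>B\<in>P'. g ` B = B) \<longrightarrow> g = id"
      using ex by auto
    then obtain Y where "P' = {Y}" using card_1_singletonE by blast
    then have "Y = \<Omega>" using P'(1) unfolding is_partition_def by auto
    then have allid: "g = id" if "g \<in> G" for g using P'(3) \<open>P' = {Y}\<close> pg_facts(5)[OF pg that] that by blast
    obtain B1 B2 x y where bb: "B1 \<in> \<Sigma>" "B2 \<in> \<Sigma>" "B1 \<noteq> B2" "x \<in> B1" "y \<in> B2" "x \<noteq> y"
      using two_points[OF part c] by blast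
    then have "x \<in> \<Omega>" "y \<in> \<Omega>" using sub by blast+
    then obtain n where n: "n \<in> G" "n x = y" using tr unfolding transitive_on_def by blast
    then show False using allid[OF n(1)] bb(6) by simp
  qed
  then show ?thesis using le2 ex by linarith
qed

theorem lemma2p2:
  fixes G :: "('a \<Rightarrow> 'a) set" and \<Omega> :: "'a set" and \<Sigma> :: "'a set set"
  assumes "finite \<Omega>"
    and "semiprimitive G \<Omega>"
    and "invariant_partition G \<Sigma> \<Omega>"
    and "nontrivial_partition \<Sigma>"
  shows "distinguishing_number G \<Omega> \<le> distinguishing_number (induced_group G \<Sigma>) \<Sigma> \<and>
         ((\<forall>\<sigma>\<in>\<Sigma>. card \<sigma> \<ge> card \<Sigma> - 1) \<longrightarrow> distinguishing_number G \<Omega> = 2)"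
  using part_i[OF assms] part_ii[OF assms] by blast

end
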